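(* For $N\ge1$ let $G_N(z,w)=\sqrt\pi\sum_{k=0}^{N-1}\sum_{\ell=0}^k\frac{(k+2)(\ell+\frac32)}{\Gamma(k+\frac72)\Gamma(\ell+3)}z^{2k+1}w^{2\ell}$, $\varkappa_N(z,w)=G_N(z,w)-G_N(w,z)$ (the skew-kernel for the weight $|z|^2(1+|z|^2)e^{-2|z|^2}$), and $\widehat\varkappa_N(z,w)=(zw)^4\varkappa_N(z,w)$. Then $$\big[z\partial_z^2-(2z^2+2)\partial_z-2z\big]\widehat\varkappa_N(z,w)=\frac12\sum_{k=0}^{2N-1}\frac{(2zw)^{k+4}}{(k+1)!}-4\sqrt\pi\frac{(N+1)(N+2)}{\Gamma(N+\frac52)}z^{2N+4}\sum_{\ell=0}^{N-1}\frac{\ell+\frac32}{(\ell+2)!}w^{2\ell+4}-3\sqrt\pi z^3\sum_{k=0}^{N-1}\frac{k+2}{\Gamma(k+\frac72)}w^{2k+5}.$$ Moreover, as $N\to\infty$, $\varkappa_N(z,w)$ converges uniformly for $z,w$ in compact subsets of $\mathbb{C}$ to $$\frac12\frac{(z-w)(1+zw-e^{2zw})}{(zw)^4}+\frac{\sqrt\pi}{4}\frac{e^{z^2+w^2}(2z^2-1)(2w^2-1)\operatorname{erf}(z-w)}{(zw)^4}+\frac{\sqrt\pi}{4}\frac{(z^2-1)(2w^2-1)e^{w^2}\operatorname{erf}(w)-(w^2-1)(2z^2-1)e^{z^2}\operatorname{erf}(z)}{(zw)^4}.$$ *)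

theory Defs
  imports "HOL-Complex_Analysis.Complex_Analysis"
begin

text \<open>Complex error function: erf z = 2/sqrt(pi) times the integral of exp(-t^2) from 0 to z
  (along the straight segment; the integrand is entire so the path is irrelevant).\<close>
definition cerf :: "complex \<Rightarrow> complex" where
  "cerf z = complex_of_real (2 / sqrt pi) * contour_integral (linepath 0 z) (\<lambda>t. exp (- (t^2)))"

definition G :: "nat \<Rightarrow> complex \<Rightarrow> complex \<Rightarrow> complex" where
  "G N z w = complex_of_real (sqrt pi) *
     (\<Sum>k<N. \<Sum>l\<le>k. complex_of_real ((real k + 2) * (real l + 3/2) /
        (Gamma (real k + 7/2) * Gamma (real l + 3))) * z ^ (2*k+1) * w ^ (2*l))"

definition skew_kernel :: "nat \<Rightarrow> complex \<Rightarrow> complex \<Rightarrow> complex" where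
  "skew_kernel N z w = G N z w - G N w z"

definition skew_kernel_hat :: "nat \<Rightarrow> complex \<Rightarrow> complex \<Rightarrow> complex" where
  "skew_kernel_hat N z w = (z * w) ^ 4 * skew_kernel N z w"

definition kernel_limit :: "complex \<Rightarrow> complex \<Rightarrow> complex" where
  "kernel_limit z w =
     (1/2) * (z - w) * (1 + z*w - exp (2*z*w)) / (z*w)^4
   + complex_of_real (sqrt pi) / 4 * exp (z^2 + w^2) * (2*z^2 - 1) * (2*w^2 - 1) * cerf (z - w) / (z*w)^4
   + complex_of_real (sqrt pi) / 4 *
       ((z^2 - 1) * (2*w^2 - 1) * exp (w^2) * cerf w - (w^2 - 1) * (2*z^2 - 1) * exp (z^2) * cerf z)
       / (z*w)^4"

end

theory Submission
  imports Defs
begin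


lemma Gamma_rec: "(x::real) > 0 \<Longrightarrow> Gamma (x + 1) = x * Gamma x"
  by (rule Gamma_plus1) (use nonpos_Ints_nonpos[of x] in force)

lemma Gamma_half: "Gamma (real n + 1/2) = fact (2*n) * sqrt pi / (4^n * fact n)"
proof (induction n)
  case 0 then show ?case by (simp add: Gamma_one_half_real)
next
  case (Suc n)
  have "Gamma (real (Suc n) + 1/2) = Gamma ((real n + 1/2) + 1)" by (simp add: algebra_simps)
  also have "\<dots> = (real n + 1/2) * Gamma (real n + 1/2)" by (rule Gamma_rec) simp
  also have "\<dots> = (real n + 1/2) * (fact (2*n) * sqrt pi / (4^n * fact n))" using Suc by simp
  also have "\<dots> = fact (2*Suc n) * sqrt pi / (4^Suc n * fact (Suc n))"
  proof -
    have f: "(fact (2*Suc n)::real) = (2*real n+2)*(2*real n+1)*fact(2*n)"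
      by (simp add: algebra_simps)
    have g: "(fact (Suc n)::real) = (real n+1)*fact n" by simp
    have p: "(4::real)^n > 0" "(fact n::real) > 0" by auto
    show ?thesis unfolding f g using p
      apply (intro eq_divide_imp)
       apply (simp add: power_Suc)
      apply (simp add: field_simps power_Suc)
      done
  qed
  finally show ?case .
qed

lemma Gamma_pos_half: "Gamma (real n + 1/2) > 0"
  by (simp add: Gamma_half)

definition ca :: "nat \<Rightarrow> real" where "ca k = sqrt pi * (real k + 2) / Gamma (real k + 7/2)"
definition cb :: "nat \<Rightarrow> real" where "cb l = (real l + 3/2) / fact (l+2)"
definition cc :: "nat \<Rightarrow> real" where "cc n = sqrt pi * (real n + 1) * (real n + 2) / Gamma (real n + 5/2)"
definition CC :: "nat \<Rightarrow> nat \<Rightarrow> complex" where "CC k l = of_real (ca k * cb l)"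

lemma Gamma_72: "Gamma (real k + 7/2) = fact (2*(k+3)) * sqrt pi / (4^(k+3) * fact (k+3))"
proof -
  have e: "real k + 7/2 = real (k+3) + 1/2" by simp
  show ?thesis unfolding e by (rule Gamma_half)
qed

lemma Gamma_52: "Gamma (real k + 5/2) = fact (2*(k+2)) * sqrt pi / (4^(k+2) * fact (k+2))"
proof -
  have e: "real k + 5/2 = real (k+2) + 1/2" by simp
  show ?thesis unfolding e by (rule Gamma_half)
qed

lemma Gamma_72_pos: "Gamma (real k + 7/2) > 0"
  unfolding Gamma_72 by simp

lemma Gamma_52_pos: "Gamma (real k + 5/2) > 0"
  unfolding Gamma_52 by simp

lemma Gamma_l3: "Gamma (real l + 3) = fact (l+2)"
  using Gamma_fact[of "l+2", where 'a=real] by (simp add: algebra_simps)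

lemma G_alt: "G N z w = (\<Sum>k<N. \<Sum>l\<le>k. CC k l * z^(2*k+1) * w^(2*l))"
  unfolding G_def sum_distrib_left
proof (intro sum.cong refl)
  fix k l
  have r: "sqrt pi * ((real k + 2) * (real l + 3/2) / (Gamma (real k + 7/2) * Gamma (real l + 3)))
     = ca k * cb l" unfolding ca_def cb_def Gamma_l3 by simp
  show "complex_of_real (sqrt pi) * (complex_of_real ((real k + 2) * (real l + 3/2) /
        (Gamma (real k + 7/2) * Gamma (real l + 3))) * z ^ (2 * k + 1) * w ^ (2 * l))
      = CC k l * z ^ (2 * k + 1) * w ^ (2 * l)" unfolding CC_def r[symmetric]
    by (simp only: of_real_mult mult.assoc)
qed

definition h0 :: "nat \<Rightarrow> complex \<Rightarrow> complex \<Rightarrow> complex" where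
  "h0 N w z = (\<Sum>k<N. \<Sum>l\<le>k. CC k l * (z^(2*k+5)*w^(2*l+4) - w^(2*k+5)*z^(2*l+4)))"
definition h1 :: "nat \<Rightarrow> complex \<Rightarrow> complex \<Rightarrow> complex" where
  "h1 N w z = (\<Sum>k<N. \<Sum>l\<le>k. CC k l * (of_nat (2*k+5) * z^(2*k+4)*w^(2*l+4)
        - w^(2*k+5)*(of_nat (2*l+4) * z^(2*l+3))))"
definition h2 :: "nat \<Rightarrow> complex \<Rightarrow> complex \<Rightarrow> complex" where
  "h2 N w z = (\<Sum>k<N. \<Sum>l\<le>k. CC k l * (of_nat ((2*k+5)*(2*k+4)) * z^(2*k+3)*w^(2*l+4)
        - w^(2*k+5)*(of_nat ((2*l+4)*(2*l+3)) * z^(2*l+2))))"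

lemma hat_h0: "skew_kernel_hat N z w = h0 N w z"
  unfolding skew_kernel_hat_def skew_kernel_def G_alt h0_def
  apply (simp add: sum_distrib_left sum_subtractf[symmetric] right_diff_distrib power_mult_distrib
        power_add algebra_simps)
  apply (intro sum.cong refl)
  apply (simp add: algebra_simps eval_nat_numeral)
  done

lemma h0_deriv: "(h0 N w has_field_derivative h1 N w z) (at z)"
  unfolding h0_def h1_def
  by (intro DERIV_sum) (auto intro!: derivative_eq_intros simp: algebra_simps)

lemma h1_deriv: "(h1 N w has_field_derivative h2 N w z) (at z)"
  unfolding h1_def h2_def
  by (intro DERIV_sum) (auto intro!: derivative_eq_intros simp: algebra_simps)

lemma ca_pos: "ca k > 0" unfolding ca_def using Gamma_72_pos[of k] by simp
lemma cb_pos: "cb k > 0" unfolding cb_def by simp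
lemma cc_pos: "cc k > 0" unfolding cc_def using Gamma_52_pos[of k] by simp

lemma Gamma_72_rec: "Gamma (real n + 7/2) = (real n + 5/2) * Gamma (real n + 5/2)"
proof -
  have e: "real n + 7/2 = (real n + 5/2) + 1" by simp
  show ?thesis unfolding e by (rule Gamma_rec) simp
qed

lemma s1_abs: "(g::real) > 0 \<Longrightarrow> x \<ge> 0 \<Longrightarrow>
   s*(x+2)/((x+5/2)*g) * ((2*x+5)*(2*x+2)) = 4*(s*(x+1)*(x+2)/g)"
  by (simp add: divide_simps) (simp add: algebra_simps)

lemma s1_real: "ca n * real ((2*n+5)*(2*n+2)) = 4 * cc n"
proof -
  have r: "real ((2*n+5)*(2*n+2)) = (2*real n+5)*(2*real n+2)" by (simp add: algebra_simps)
  show ?thesis unfolding ca_def cc_def Gamma_72_rec r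
    by (rule s1_abs[OF Gamma_52_pos[of n]]) simp
qed

lemma s2_abs: "(g::real) > 0 \<Longrightarrow> x \<ge> 0 \<Longrightarrow>
   s*(x+2)/g * (2*(2*x+6)) = 4*(s*(x+1+1)*(x+1+2)/g)"
  by (simp add: divide_simps) (simp add: algebra_simps)

lemma s2_real: "ca n * real (2*(2*n+6)) = 4 * cc (Suc n)"
proof -
  have e: "real (Suc n) + 5/2 = real n + 7/2" by simp
  show ?thesis unfolding ca_def cc_def e using s2_abs[OF Gamma_72_pos[of n], of "real n" "sqrt pi"]
    by (simp add: mult.assoc)
qed

lemma s3_abs: "(f::real) > 0 \<Longrightarrow> q > 0 \<Longrightarrow> p > 0 \<Longrightarrow> s > 0 \<Longrightarrow> x \<ge> 0 \<Longrightarrow>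
  4 * (s * (x+1) * (x+2) / ((2*x+4)*(2*x+3)*(2*x+2)*f * s / (16*p * q))) * ((x + 3/2) / q)
   = 16 * p / (2 * f)"
  by (simp add: divide_simps) (simp add: algebra_simps)

lemma s3_real: "4 * cc n * cb n = 2^(2*n+4) / (2 * fact (2*n+1))"
proof -
  have f: "(fact (2*(n+2))::real) = (2*real n+4)*(2*real n+3)*(2*real n+2)*fact(2*n+1)"
    by (simp add: algebra_simps numeral_eq_Suc)
  have e: "(2::real)^(2*n+4) = 16 * 4^n" by (simp add: power_add power_mult)
  have e2: "(4::real)^(n+2) = 16 * 4^n" by (simp add: power_add)
  show ?thesis unfolding cc_def cb_def Gamma_52 f e e2
    using s3_abs[of "fact (2*n+1)" "fact (n+2)" "4^n" "sqrt pi" "real n"]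
    by (simp add: mult.assoc)
qed

lemma s4_abs: "(f::real) > 0 \<Longrightarrow> q > 0 \<Longrightarrow> p > 0 \<Longrightarrow> s > 0 \<Longrightarrow> x \<ge> 0 \<Longrightarrow>
  s * (x+2) / ((2*x+6)*(2*x+5)*(2*x+4)*(2*x+3)*f * s / (64*p * ((x+3)*q))) * ((x + 3/2) / q)
    * (2*(2*x+5)) = 32 * p / (2 * f)"
  by (simp add: divide_simps) (simp add: algebra_simps)

lemma s4_real: "ca n * cb n * (2*(2*real n+5)) = 2^(2*n+5) / (2 * fact (2*n+2))"
proof -
  have f: "(fact (2*(n+3))::real) = (2*real n+6)*(2*real n+5)*(2*real n+4)*(2*real n+3)*fact(2*n+2)"
    by (simp add: algebra_simps numeral_eq_Suc)
  have g: "(fact (n+3)::real) = (real n + 3) * fact (n+2)" by (simp add: numeral_eq_Suc)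
  have e: "(2::real)^(2*n+5) = 32 * 4^n" by (simp add: power_add power_mult)
  have e2: "(4::real)^(n+3) = 64 * 4^n" by (simp add: power_add)
  show ?thesis unfolding ca_def cb_def Gamma_72 f g e e2
    using s4_abs[of "fact (2*n+2)" "fact (n+2)" "4^n" "sqrt pi" "real n"]
    by (simp add: mult.assoc)
qed

lemma cb_abs: "(q::real) > 0 \<Longrightarrow> x \<ge> 0 \<Longrightarrow>
   (x + 1 + 3/2) / ((x+3)*q) * ((2*x+6)*(2*x+3)) = (x + 3/2) / q * (2*(2*x+5))"
  by (simp add: divide_simps) (simp add: algebra_simps)

lemma cb_rec: "cb (Suc n) * real ((2*n+6)*(2*n+3)) = cb n * (2*(2*real n+5))"
proof -
  have g: "(fact (Suc n+2)::real) = (real n + 3) * fact (n+2)" by (simp add: numeral_eq_Suc)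
  show ?thesis unfolding cb_def g using cb_abs[of "fact (n+2)" "real n"]
    by (simp add: mult.assoc)
qed

definition Am :: "nat \<Rightarrow> complex \<Rightarrow> complex" where
  "Am n z = of_nat ((2*n+5)*(2*n+2)) * z^(2*n+4) - of_nat (2*(2*n+6)) * z^(2*n+6)"
definition Bm :: "nat \<Rightarrow> complex \<Rightarrow> complex" where
  "Bm l z = of_nat ((2*l+4)*(2*l+1)) * z^(2*l+3) - of_nat (2*(2*l+5)) * z^(2*l+5)"

lemma tA: "z*(of_nat ((2*k+5)*(2*k+4))*z^(2*k+3)) - (2*z^2+2)*(of_nat (2*k+5)*z^(2*k+4))
   - 2*z*z^(2*k+5) = Am k (z::complex)"
proof -
  have e: "z^(2*k+4) = z^(2*k+3)*z" "z^(2*k+5) = z^(2*k+3)*z^2" "z^(2*k+6) = z^(2*k+3)*z^3"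
    by (simp_all add: power_add eval_nat_numeral algebra_simps)
  show ?thesis unfolding Am_def e by (simp add: algebra_simps power2_eq_square power3_eq_cube)
qed

lemma tB: "z*(of_nat ((2*l+4)*(2*l+3))*z^(2*l+2)) - (2*z^2+2)*(of_nat (2*l+4)*z^(2*l+3))
   - 2*z*z^(2*l+4) = Bm l (z::complex)"
proof -
  have e: "z^(2*l+3) = z^(2*l+2)*z" "z^(2*l+4) = z^(2*l+2)*z^2" "z^(2*l+5) = z^(2*l+2)*z^3"
    by (simp_all add: power_add eval_nat_numeral algebra_simps)
  show ?thesis unfolding Bm_def e by (simp add: algebra_simps power2_eq_square power3_eq_cube)
qed

lemma lin3: "(z::complex)*(C*(X1*W - V*Y1)) - c*(C*(X2*W - V*Y2)) - d*(C*(X3*W - V*Y3))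
   = C*(W*(z*X1 - c*X2 - d*X3) - V*(z*Y1 - c*Y2 - d*Y3))"
  by (simp add: algebra_simps)

definition Lsum :: "nat \<Rightarrow> complex \<Rightarrow> complex \<Rightarrow> complex" where
  "Lsum N w z = (\<Sum>k<N. \<Sum>l\<le>k. CC k l * (w^(2*l+4) * Am k z - w^(2*k+5) * Bm l z))"

lemma Lop_sum: "z * h2 N w z - (2*z^2+2) * h1 N w z - 2*z*h0 N w z = Lsum N w z"
proof -
  have "z * h2 N w z - (2*z^2+2) * h1 N w z - 2*z*h0 N w z =
    (\<Sum>k<N. \<Sum>l\<le>k. z * (CC k l * (of_nat ((2*k+5)*(2*k+4)) * z^(2*k+3)*w^(2*l+4)
        - w^(2*k+5)*(of_nat ((2*l+4)*(2*l+3)) * z^(2*l+2))))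
      - (2*z^2+2) * (CC k l * (of_nat (2*k+5) * z^(2*k+4)*w^(2*l+4)
        - w^(2*k+5)*(of_nat (2*l+4) * z^(2*l+3))))
      - 2*z * (CC k l * (z^(2*k+5)*w^(2*l+4) - w^(2*k+5)*z^(2*l+4))))"
    unfolding h0_def h1_def h2_def by (simp add: sum_distrib_left sum_subtractf)
  also have "\<dots> = Lsum N w z"
    unfolding Lsum_def
  proof (intro sum.cong refl)
    fix k l
    have e1: "z^(2*k+5)*w^(2*l+4) = z^(2*k+5)*w^(2*l+4)" by simp
    show "z * (CC k l * (of_nat ((2*k+5)*(2*k+4)) * z^(2*k+3)*w^(2*l+4)
        - w^(2*k+5)*(of_nat ((2*l+4)*(2*l+3)) * z^(2*l+2))))
      - (2*z^2+2) * (CC k l * (of_nat (2*k+5) * z^(2*k+4)*w^(2*l+4)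
        - w^(2*k+5)*(of_nat (2*l+4) * z^(2*l+3))))
      - 2*z * (CC k l * (z^(2*k+5)*w^(2*l+4) - w^(2*k+5)*z^(2*l+4)))
      = CC k l * (w^(2*l+4) * Am k z - w^(2*k+5) * Bm l z)"
      unfolding lin3 tA tB[symmetric] by (simp add: algebra_simps)
  qed
  finally show ?thesis .
qed

lemma T1: "(\<Sum>l\<le>n. of_real (cb l) * Bm l z) = 3*z^3 - of_real (cb n * (2*(2*real n+5))) * z^(2*n+5)"
proof (induction n)
  case 0
  show ?case by (simp add: Bm_def cb_def algebra_simps)
next
  case (Suc n)
  have c: "of_real (cb (Suc n)) * of_nat ((2*n+6)*(2*n+3)) = (of_real (cb n * (2*(2*real n+5))) :: complex)"
    using arg_cong[OF cb_rec[of n], of complex_of_real] by simp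
  have "(\<Sum>l\<le>Suc n. of_real (cb l) * Bm l z) = 3*z^3 - of_real (cb n * (2*(2*real n+5))) * z^(2*n+5)
     + of_real (cb (Suc n)) * (of_nat ((2*n+6)*(2*n+3)) * z^(2*n+5) - of_nat (2*(2*n+7)) * z^(2*n+7))"
    using Suc by (simp add: Bm_def algebra_simps)
  also have "\<dots> = 3*z^3 - of_real (cb (Suc n)) * of_nat (2*(2*n+7)) * z^(2*n+7)"
  proof -
    have c2: "of_real (cb (Suc n)) * (of_nat ((2*n+6)*(2*n+3)) * z^(2*n+5)) = of_real (cb n * (2*(2*real n+5))) * z^(2*n+5)"
      by (simp only: mult.assoc[symmetric] c)
    show ?thesis unfolding right_diff_distrib c2 by (simp add: algebra_simps)
  qed
  also have "of_real (cb (Suc n)) * of_nat (2*(2*n+7)) * z^(2*n+7) = of_real (cb (Suc n) * (2*(2*real (Suc n)+5))) * z^(2*Suc n+5)"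
    by (simp add: algebra_simps)
  finally show ?case .
qed

definition Rp :: "nat \<Rightarrow> complex \<Rightarrow> complex \<Rightarrow> complex" where
  "Rp N z w = (1/2) * (\<Sum>k<2*N. (2*z*w)^(k+4) / of_nat (fact (k+1)))
     - 4 * of_real (cc N) * z^(2*N+4) * (\<Sum>l<N. of_real (cb l) * w^(2*l+4))
     - 3 * z^3 * (\<Sum>k<N. of_real (ca k) * w^(2*k+5))"

lemma step_alg:
  fixes Ln Z c0 c1 P4 P5 P6 X Y z3 ca A b b2 W4 W5 t1 t2 :: complex
  assumes "Ln = (1/2)*Z - 4*c0*P4*X - 3*z3*Y"
    "ca*A = 4*c0*P4 - 4*c1*P6"
    "(1/2)*t1 = 4*c0*b*P4*W4" "(1/2)*t2 = ca*b2*P5*W5"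
  shows "Ln + (ca*A*(X + b*W4) - ca*W5*(3*z3 - b2*P5))
     = (1/2)*(Z + t1 + t2) - 4*c1*P6*(X+b*W4) - 3*z3*(Y + ca*W5)"
  using assms by algebra

lemma tele: "Lsum N w z = Rp N z w"
proof (induction N)
  case 0
  show ?case by (simp add: Lsum_def Rp_def)
next
  case (Suc n)
  have d1: "Lsum (Suc n) w z = Lsum n w z + (\<Sum>l\<le>n. CC n l * (w^(2*l+4)*Am n z - w^(2*n+5)*Bm l z))"
    by (simp add: Lsum_def)
  have d2: "(\<Sum>l\<le>n. CC n l * (w^(2*l+4)*Am n z - w^(2*n+5)*Bm l z)) =
     of_real (ca n) * Am n z * (\<Sum>l\<le>n. of_real (cb l)*w^(2*l+4))
     - of_real (ca n) * w^(2*n+5) * (\<Sum>l\<le>n. of_real (cb l) * Bm l z)"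
    unfolding sum_distrib_left sum_subtractf[symmetric]
    by (intro sum.cong refl) (simp add: CC_def algebra_simps)
  have sx: "(\<Sum>l\<le>n. of_real (cb l)*w^(2*l+4)) = (\<Sum>l<n. of_real (cb l)*w^(2*l+4)) + of_real (cb n) * w^(2*n+4)"
    by (simp add: lessThan_Suc_atMost[symmetric])
  have sx2: "(\<Sum>l<Suc n. of_real (cb l)*w^(2*l+4)) = (\<Sum>l<n. of_real (cb l)*w^(2*l+4)) + of_real (cb n) * w^(2*n+4)"
    by simp
  have sy: "(\<Sum>k<Suc n. of_real (ca k) * w^(2*k+5)) = (\<Sum>k<n. of_real (ca k) * w^(2*k+5)) + of_real (ca n) * w^(2*n+5)"
    by simp
  have sz: "(\<Sum>k<2*Suc n. (2*z*w)^(k+4) / of_nat (fact (k+1))) =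
     (\<Sum>k<2*n. (2*z*w)^(k+4) / of_nat (fact (k+1))) + (2*z*w)^(2*n+4) / of_nat (fact (2*n+1))
      + (2*z*w)^(2*n+5) / of_nat (fact (2*n+2))"
  proof -
    have "2*Suc n = Suc (Suc (2*n))" by simp
    then show ?thesis by (simp add: algebra_simps)
  qed
  have hA: "of_real (ca n) * Am n z = 4* of_real (cc n)*z^(2*n+4) - 4* of_real (cc (Suc n))*z^(2*n+6)"
  proof -
    have a1: "of_real (ca n) * (of_nat ((2*n+5)*(2*n+2)) :: complex) = 4 * of_real (cc n)"
      using arg_cong[OF s1_real[of n], of complex_of_real] by simp
    have a2: "of_real (ca n) * (of_nat (2*(2*n+6)) :: complex) = 4 * of_real (cc (Suc n))"
      using arg_cong[OF s2_real[of n], of complex_of_real] by simp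
    show ?thesis unfolding Am_def right_diff_distrib mult.assoc[symmetric] a1 a2 by simp
  qed
  have h3: "(1/2) * ((2*z*w)^(2*n+4) / of_nat (fact (2*n+1))) = 4* of_real (cc n)* of_real (cb n)*z^(2*n+4)*w^(2*n+4)"
  proof -
    have a: "4* of_real (cc n)* of_real (cb n) = (of_real (2^(2*n+4) / (2 * fact (2*n+1))) :: complex)"
      using arg_cong[OF s3_real[of n], of complex_of_real] by simp
    show ?thesis unfolding a by (simp add: power_mult_distrib field_simps)
  qed
  have h4: "(1/2) * ((2*z*w)^(2*n+5) / of_nat (fact (2*n+2))) = of_real (ca n)* of_real (cb n * (2*(2*real n+5)))*z^(2*n+5)*w^(2*n+5)"
  proof -
    have a: "of_real (ca n)* of_real (cb n * (2*(2*real n+5))) = (of_real (2^(2*n+5) / (2 * fact (2*n+2))) :: complex)"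
      using arg_cong[OF s4_real[of n], of complex_of_real] by (simp add: mult.assoc)
    show ?thesis unfolding a by (simp add: power_mult_distrib field_simps)
  qed
  have ih: "Lsum n w z = (1/2) * (\<Sum>k<2*n. (2*z*w)^(k+4) / of_nat (fact (k+1)))
     - 4 * of_real (cc n) * z^(2*n+4) * (\<Sum>l<n. of_real (cb l) * w^(2*l+4))
     - 3 * z^3 * (\<Sum>k<n. of_real (ca k) * w^(2*k+5))"
    using Suc.IH by (simp add: Rp_def)
  have p6: "z^(2*Suc n+4) = z^(2*n+6)" by (simp add: add.commute)
  show ?case
    unfolding d1 d2 T1 sx
    unfolding Rp_def sz sx2 sy p6
    by (rule step_alg[OF ih hA h3 h4])
qed

theorem part1:
  assumes "N \<ge> 1"
  shows "z * deriv (deriv (\<lambda>\<zeta>. skew_kernel_hat N \<zeta> w)) z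
      - (2 * z^2 + 2) * deriv (\<lambda>\<zeta>. skew_kernel_hat N \<zeta> w) z
      - 2 * z * skew_kernel_hat N z w
    = (1/2) * (\<Sum>k\<le>2*N-1. (2*z*w) ^ (k+4) / of_nat (fact (k+1)))
      - 4 * complex_of_real (sqrt pi * (real N + 1) * (real N + 2) / Gamma (real N + 5/2))
          * z ^ (2*N+4) * (\<Sum>l<N. complex_of_real ((real l + 3/2) / fact (l+2)) * w ^ (2*l+4))
      - 3 * complex_of_real (sqrt pi) * z^3
          * (\<Sum>k<N. complex_of_real ((real k + 2) / Gamma (real k + 7/2)) * w ^ (2*k+5))"
proof -
  have e0: "(\<lambda>\<zeta>. skew_kernel_hat N \<zeta> w) = h0 N w" by (simp add: hat_h0 fun_eq_iff)
  have e1: "deriv (h0 N w) = h1 N w" using h0_deriv DERIV_imp_deriv by blast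
  have e2: "deriv (h1 N w) = h2 N w" using h1_deriv DERIV_imp_deriv by blast
  have at: "{..2*N-1} = {..<2*N}" using assms by auto
  have c3: "3 * complex_of_real (sqrt pi) * z^3
          * (\<Sum>k<N. complex_of_real ((real k + 2) / Gamma (real k + 7/2)) * w ^ (2*k+5))
       = 3 * z^3 * (\<Sum>k<N. of_real (ca k) * w^(2*k+5))"
    by (simp add: ca_def sum_distrib_left algebra_simps)
  show ?thesis unfolding e0 e1 e2 hat_h0 Lop_sum tele at c3
    by (simp add: Rp_def cc_def cb_def)
qed



lemma Gamma_72_succ: "Gamma (real (Suc k) + 7/2) = (real k + 7/2) * Gamma (real k + 7/2)"
proof -
  have e: "real (Suc k) + 7/2 = (real k + 7/2) + 1" by simp
  show ?thesis unfolding e by (rule Gamma_rec) simp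
qed

lemma ca_rec_abs: assumes "(g::real) > 0" "x \<ge> 0" "s \<ge> 0" shows
  "s * (x+1+2) / ((x+7/2)*g) \<le> s*(x+2)/g / (x+1)"
  using assms by (simp add: divide_simps) (simp add: algebra_simps mult_right_mono)

lemma ca_0: "ca 0 = 16/15"
proof -
  have "Gamma (real 0 + 7/2) = fact (2*(0+3)) * sqrt pi / (4^(0+3) * fact (0+3))" by (rule Gamma_72)
  then have g: "Gamma (7/2) = 15/8 * sqrt pi" by (simp add: fact_numeral)
  show ?thesis unfolding ca_def by (simp add: g)
qed

lemma ca_le: "ca k \<le> 2 / fact k"
proof (induction k)
  case 0 then show ?case by (simp add: ca_0)
next
  case (Suc k)
  have "ca (Suc k) \<le> ca k / (real k + 1)"
    unfolding ca_def Gamma_72_succ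
    using ca_rec_abs[OF Gamma_72_pos[of k], of "real k" "sqrt pi"] by (simp add: algebra_simps)
  also have "\<dots> \<le> (2 / fact k) / (real k + 1)"
    using Suc by (intro divide_right_mono) auto
  also have "\<dots> = 2 / fact (Suc k)" by (simp add: algebra_simps)
  finally show ?case .
qed

lemma poly_le: "real ((k+1)*(2*k+5)^2) \<le> 25 * 8^k"
proof (induction k)
  case 0 then show ?case by simp
next
  case (Suc k)
  have "real ((Suc k+1)*(2*Suc k+5)^2) \<le> 8 * real ((k+1)*(2*k+5)^2)"
    by (simp add: power2_eq_square algebra_simps)
  also have "\<dots> \<le> 8 * (25 * 8^k)" using Suc by simp
  finally show ?case by simp
qed

definition MB :: "real \<Rightarrow> nat \<Rightarrow> real" where
  "MB R k = 2 * real ((k+1)*(2*k+5)^2) * ca k * R^(4*k+9)"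

lemma MB_summable: assumes "R \<ge> 0" shows "summable (MB R)"
proof (rule summable_comparison_test)
  show "summable (\<lambda>k. 100 * R^9 * (inverse (fact k) * (8*R^4)^k))"
    by (intro summable_mult summable_exp)
  show "\<exists>N. \<forall>n\<ge>N. norm (MB R n) \<le> 100 * R^9 * (inverse (fact n) * (8*R^4)^n)"
  proof (intro exI allI impI)
    fix n :: nat
    have "norm (MB R n) = 2 * real ((n+1)*(2*n+5)^2) * ca n * R^(4*n+9)"
      unfolding MB_def using ca_pos[of n] assms by simp
    also have "\<dots> \<le> 2 * (25 * 8^n) * (2 / fact n) * R^(4*n+9)"
      using poly_le[of n] ca_le[of n] ca_pos[of n] assms
      by (intro mult_right_mono mult_mono) auto
    also have "\<dots> = 100 * R^9 * (inverse (fact n) * (8*R^4)^n)"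
    proof -
      have "R^(4*n+9) = R^9 * (R^4)^n" by (simp add: power_add power_mult)
      then show ?thesis by (simp add: power_mult_distrib field_simps)
    qed
    finally show "norm (MB R n) \<le> 100 * R^9 * (inverse (fact n) * (8*R^4)^n)" .
  qed
qed

lemma MB_nonneg: "R \<ge> 0 \<Longrightarrow> MB R k \<ge> 0"
  unfolding MB_def using ca_pos[of k] by simp

lemma cb_le1: "cb l \<le> 1"
proof -
  have "real l + 3/2 \<le> real (l+2)" by simp
  also have "\<dots> \<le> fact (l+2)" using fact_ge_self[of "l+2"] by (metis of_nat_fact of_nat_le_iff)
  finally show ?thesis unfolding cb_def by simp
qed

lemma norm_CC: "norm (CC k l) \<le> ca k"
proof -
  have "norm (CC k l) = ca k * cb l" unfolding CC_def norm_of_real using ca_pos[of k] cb_pos[of l] by simp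
  also have "\<dots> \<le> ca k" using ca_pos[of k] cb_le1[of l] by (intro mult_left_le) auto
  finally show ?thesis .
qed

lemma mono_bound:
  fixes z w :: complex
  assumes "norm z \<le> R" "norm w \<le> R" "1 \<le> R" "p + q \<le> m"
  shows "norm (z^p * w^q) \<le> R^m"
proof -
  have "norm (z^p * w^q) \<le> R^p * R^q"
    unfolding norm_mult norm_power using assms
    by (intro mult_mono power_mono) auto
  also have "\<dots> = R^(p+q)" by (simp add: power_add)
  also have "\<dots> \<le> R^m" using assms by (intro power_increasing) auto
  finally show ?thesis .
qed

lemma term_bound:
  fixes z w a b A B :: complex
  assumes "norm A \<le> c * R^m" "norm B \<le> c * R^m"
  shows "norm (CC k l * (A - B)) \<le> ca k * (2 * c * R^m)"
proof -
  have "norm (CC k l * (A - B)) \<le> ca k * (norm A + norm B)"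
    unfolding norm_mult using norm_CC[of k l] norm_triangle_ineq4[of A B] less_imp_le[OF ca_pos[of k]]
    by (intro mult_mono) auto
  also have "\<dots> \<le> ca k * (2 * c * R^m)"
    using assms less_imp_le[OF ca_pos[of k]] by (intro mult_left_mono) auto
  finally show ?thesis .
qed

lemma sum_bound:
  assumes "\<And>l. l \<le> k \<Longrightarrow> norm (f l) \<le> (B::real)"
  shows "norm (\<Sum>l\<le>k. f l) \<le> real (k+1) * B"
proof -
  have "norm (\<Sum>l\<le>k. f l) \<le> (\<Sum>l\<le>k. norm (f l))" by (rule norm_sum)
  also have "\<dots> \<le> (\<Sum>l\<le>k. B)" using assms by (intro sum_mono) auto
  finally show ?thesis by simp
qed

lemma series_deriv_gen:
  fixes f f' :: "nat \<Rightarrow> complex \<Rightarrow> complex" and MB :: "real \<Rightarrow> nat \<Rightarrow> real"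
  assumes d: "\<And>n z. (f n has_field_derivative f' n z) (at z)"
    and b0: "\<And>R n z. max 1 R0 \<le> R \<Longrightarrow> norm z \<le> R \<Longrightarrow> norm (f n z) \<le> MB R n"
    and b1: "\<And>R n z. max 1 R0 \<le> R \<Longrightarrow> norm z \<le> R \<Longrightarrow> norm (f' n z) \<le> MB R n"
    and MB_summable: "\<And>R. R \<ge> 0 \<Longrightarrow> summable (MB R)"
  shows "summable (\<lambda>n. f n z)" "((\<lambda>z. \<Sum>n. f n z) has_field_derivative (\<Sum>n. f' n z)) (at z)"
proof -
  define R where "R = max 1 R0 + norm z + 1"
  have R: "max 1 R0 \<le> R" "R \<ge> 0" unfolding R_def using norm_ge_zero[of z] max.cobounded1[of 1 R0] by linarith+
  have uc: "uniformly_convergent_on (cball 0 R) (\<lambda>n x. \<Sum>i<n. f' i x)"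
    by (rule Weierstrass_m_test'[OF _ MB_summable[OF R(2)]]) (use b1 R in auto)
  have s0: "summable (\<lambda>n. f n 0)"
    by (rule summable_comparison_test[OF _ MB_summable[OF R(2)]]) (use b0 R in auto)
  have zi: "z \<in> interior (cball 0 R)" unfolding R_def by (simp add: dist_norm)
  show "summable (\<lambda>n. f n z)" "((\<lambda>z. \<Sum>n. f n z) has_field_derivative (\<Sum>n. f' n z)) (at z)"
  proof -
    have dd: "\<And>n x. x \<in> cball 0 R \<Longrightarrow> (f n has_field_derivative f' n x) (at x within cball 0 R)"
      using d by (auto intro: has_field_derivative_at_within)
    have x0: "(0::complex) \<in> cball 0 R" using R by simp
    show "summable (\<lambda>n. f n z)" "((\<lambda>z. \<Sum>n. f n z) has_field_derivative (\<Sum>n. f' n z)) (at z)"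
      using has_field_derivative_series'[of "cball 0 R" f f' 0 z, OF convex_cball dd uc x0 s0 zi] by auto
  qed
qed

definition hr0 :: "nat \<Rightarrow> complex \<Rightarrow> complex \<Rightarrow> complex" where
  "hr0 k w z = (\<Sum>l\<le>k. CC k l * (z^(2*k+5)*w^(2*l+4) - w^(2*k+5)*z^(2*l+4)))"
definition hr1 :: "nat \<Rightarrow> complex \<Rightarrow> complex \<Rightarrow> complex" where
  "hr1 k w z = (\<Sum>l\<le>k. CC k l * (of_nat (2*k+5) * z^(2*k+4)*w^(2*l+4)
        - w^(2*k+5)*(of_nat (2*l+4) * z^(2*l+3))))"
definition hr2 :: "nat \<Rightarrow> complex \<Rightarrow> complex \<Rightarrow> complex" where
  "hr2 k w z = (\<Sum>l\<le>k. CC k l * (of_nat ((2*k+5)*(2*k+4)) * z^(2*k+3)*w^(2*l+4)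
        - w^(2*k+5)*(of_nat ((2*l+4)*(2*l+3)) * z^(2*l+2))))"
definition krow :: "nat \<Rightarrow> complex \<Rightarrow> complex \<Rightarrow> complex" where
  "krow k z w = (\<Sum>l\<le>k. CC k l * (z^(2*k+1)*w^(2*l) - w^(2*k+1)*z^(2*l)))"

lemma h0_eq: "h0 N w z = (\<Sum>k<N. hr0 k w z)" unfolding h0_def hr0_def ..
lemma h1_eq: "h1 N w z = (\<Sum>k<N. hr1 k w z)" unfolding h1_def hr1_def ..
lemma h2_eq: "h2 N w z = (\<Sum>k<N. hr2 k w z)" unfolding h2_def hr2_def ..

lemma hr0_deriv: "(hr0 k w has_field_derivative hr1 k w z) (at z)"
  unfolding hr0_def hr1_def
  by (intro DERIV_sum) (auto intro!: derivative_eq_intros simp: algebra_simps)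

lemma hr1_deriv: "(hr1 k w has_field_derivative hr2 k w z) (at z)"
  unfolding hr1_def hr2_def
  by (intro DERIV_sum) (auto intro!: derivative_eq_intros simp: algebra_simps)

lemma nb1:
  fixes z w :: complex and a c :: nat
  assumes "norm z \<le> R" "norm w \<le> R" "1 \<le> R" "p + q \<le> m" "a \<le> c"
  shows "norm (of_nat a * z^p * w^q) \<le> real c * R^m"
proof -
  have "norm (of_nat a * z^p * w^q) = real a * norm (z^p * w^q)" by (simp add: norm_mult)
  also have "\<dots> \<le> real c * R^m" using mono_bound[OF assms(1-4)] assms(5)
    by (intro mult_mono) auto
  finally show ?thesis .
qed

lemma nb2:
  fixes z w :: complex and a c :: nat
  assumes "norm z \<le> R" "norm w \<le> R" "1 \<le> R" "p + q \<le> m" "a \<le> c"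
  shows "norm (w^q * (of_nat a * z^p)) \<le> real c * R^m"
  using nb1[OF assms] by (simp add: algebra_simps)

lemma le_sq: "(a::nat) \<le> b \<Longrightarrow> a \<le> b^2"
  by (metis le_trans power2_nat_le_imp_le le_square power2_eq_square nat_le_linear)

lemma hr_bounds:
  fixes z w :: complex
  assumes "norm z \<le> R" "norm w \<le> R" "1 \<le> R"
  shows "norm (hr0 k w z) \<le> MB R k" "norm (hr1 k w z) \<le> MB R k" "norm (hr2 k w z) \<le> MB R k"
    "norm (krow k z w) \<le> MB R k"
proof -
  let ?c = "(2*k+5)^2"
  have mb: "MB R k = real (k+1) * (ca k * (2 * real ?c * R^(4*k+9)))"
    unfolding MB_def by (simp add: algebra_simps)
  show "norm (hr0 k w z) \<le> MB R k" unfolding hr0_def mb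
  proof (rule sum_bound, rule term_bound)
    fix l assume l: "l \<le> k"
    show "norm (z^(2*k+5)*w^(2*l+4)) \<le> real ?c * R^(4*k+9)"
      using nb1[OF assms, of "2*k+5" "2*l+4" "4*k+9" 1 ?c] l by simp
    show "norm (w^(2*k+5)*z^(2*l+4)) \<le> real ?c * R^(4*k+9)"
      using nb1[OF assms, of "2*l+4" "2*k+5" "4*k+9" 1 ?c] l by (simp add: mult.commute)
  qed
  show "norm (krow k z w) \<le> MB R k" unfolding krow_def mb
  proof (rule sum_bound, rule term_bound)
    fix l assume l: "l \<le> k"
    show "norm (z^(2*k+1)*w^(2*l)) \<le> real ?c * R^(4*k+9)"
      using nb1[OF assms, of "2*k+1" "2*l" "4*k+9" 1 ?c] l by simp
    show "norm (w^(2*k+1)*z^(2*l)) \<le> real ?c * R^(4*k+9)"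
      using nb1[OF assms, of "2*l" "2*k+1" "4*k+9" 1 ?c] l by (simp add: mult.commute)
  qed
  show "norm (hr1 k w z) \<le> MB R k" unfolding hr1_def mb
  proof (rule sum_bound, rule term_bound)
    fix l assume l: "l \<le> k"
    have a: "2*k+5 \<le> ?c" by (rule le_sq) simp
    have b: "2*l+4 \<le> ?c" using l by (intro le_sq) simp
    show "norm (of_nat (2*k+5) * z^(2*k+4)*w^(2*l+4)) \<le> real ?c * R^(4*k+9)"
      using l a by (intro nb1[OF assms]) auto
    show "norm (w^(2*k+5)*(of_nat (2*l+4) * z^(2*l+3))) \<le> real ?c * R^(4*k+9)"
      using l b by (intro nb2[OF assms]) auto
  qed
  show "norm (hr2 k w z) \<le> MB R k" unfolding hr2_def mb
  proof (rule sum_bound, rule term_bound)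
    fix l assume l: "l \<le> k"
    have a: "(2*k+5)*(2*k+4) \<le> ?c" by (simp add: power2_eq_square)
    have b: "(2*l+4)*(2*l+3) \<le> ?c" using l by (simp add: power2_eq_square mult_le_mono)
    show "norm (of_nat ((2*k+5)*(2*k+4)) * z^(2*k+3)*w^(2*l+4)) \<le> real ?c * R^(4*k+9)"
      using l a by (intro nb1[OF assms]) auto
    show "norm (w^(2*k+5)*(of_nat ((2*l+4)*(2*l+3)) * z^(2*l+2))) \<le> real ?c * R^(4*k+9)"
      using l b by (intro nb2[OF assms]) auto
  qed
qed

definition Pf :: "complex \<Rightarrow> complex \<Rightarrow> complex" where "Pf w z = (\<Sum>n. hr0 n w z)"
definition P1f :: "complex \<Rightarrow> complex \<Rightarrow> complex" where "P1f w z = (\<Sum>n. hr1 n w z)"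
definition P2f :: "complex \<Rightarrow> complex \<Rightarrow> complex" where "P2f w z = (\<Sum>n. hr2 n w z)"

lemma Pf_facts:
  shows "summable (\<lambda>n. hr0 n w z)" "summable (\<lambda>n. hr1 n w z)" "summable (\<lambda>n. hr2 n w z)"
    "(Pf w has_field_derivative P1f w z) (at z)" "(P1f w has_field_derivative P2f w z) (at z)"
proof -
  have b: "\<And>R n z. max 1 (norm w) \<le> R \<Longrightarrow> norm z \<le> R \<Longrightarrow>
     norm (hr0 n w z) \<le> MB R n \<and> norm (hr1 n w z) \<le> MB R n \<and> norm (hr2 n w z) \<le> MB R n"
    using hr_bounds by auto
  note A = series_deriv_gen[of "\<lambda>n. hr0 n w" "\<lambda>n z. hr1 n w z" "norm w" MB z, OF hr0_deriv _ _ MB_summable]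
  note B = series_deriv_gen[of "\<lambda>n. hr1 n w" "\<lambda>n z. hr2 n w z" "norm w" MB z, OF hr1_deriv _ _ MB_summable]
  show "summable (\<lambda>n. hr0 n w z)" "(Pf w has_field_derivative P1f w z) (at z)"
    using A b unfolding Pf_def[abs_def] P1f_def by auto
  show "summable (\<lambda>n. hr1 n w z)" "(P1f w has_field_derivative P2f w z) (at z)"
    using B b unfolding P1f_def[abs_def] P2f_def by auto
  show "summable (\<lambda>n. hr2 n w z)"
    by (rule summable_comparison_test[OF _ MB_summable[of "max 1 (norm w) + norm z"]])
      (use b[of "max 1 (norm w) + norm z"] in auto)
qed

definition cs :: "nat \<Rightarrow> real" where "cs j = 1 / Gamma (real j + 3/2)"

lemma Gamma_32_pos: "Gamma (real j + 3/2) > 0"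
proof -
  have e: "real j + 3/2 = real (j+1) + 1/2" by simp
  show ?thesis unfolding e by (rule Gamma_pos_half)
qed

lemma cs_pos: "cs j > 0" unfolding cs_def using Gamma_32_pos[of j] by simp

lemma cs_rec: "cs j = (real j + 3/2) * cs (Suc j)"
proof -
  have e: "real (Suc j) + 3/2 = (real j + 3/2) + 1" by simp
  have "Gamma (real (Suc j) + 3/2) = (real j + 3/2) * Gamma (real j + 3/2)"
    unfolding e by (rule Gamma_rec) simp
  then show ?thesis unfolding cs_def using Gamma_32_pos[of j] by simp
qed

lemma Gamma_32: "Gamma (3/2::real) = sqrt pi / 2"
proof -
  have "Gamma (1/2 + 1 :: real) = 1/2 * Gamma (1/2)" by (rule Gamma_rec) simp
  then show ?thesis by (simp add: Gamma_one_half_real)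
qed

lemma cs0: "cs 0 = 2 / sqrt pi" unfolding cs_def by (simp add: Gamma_32)

lemma cs1: "cs 1 = 4 / (3 * sqrt pi)"
  using cs_rec[of 0] cs0 by (simp add: field_simps)

lemma ca_cs: "ca k = sqrt pi * (real k + 2) * cs (k+2)"
proof -
  have e: "real (k+2) + 3/2 = real k + 7/2" by simp
  show ?thesis unfolding ca_def cs_def e by simp
qed

lemma sqrt_pi_ge1: "sqrt pi \<ge> 1"
  using pi_gt3 by (simp add: real_le_rsqrt)

lemma cs_le: "cs j \<le> 2 / fact j"
proof (induction j)
  case 0 show ?case unfolding cs0 using sqrt_pi_ge1 by (simp add: divide_simps)
next
  case (Suc j)
  have "cs (Suc j) = cs j / (real j + 3/2)" using cs_rec[of j] by (simp add: field_simps)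
  also have "\<dots> \<le> cs j / (real j + 1)" using cs_pos[of j] by (intro divide_left_mono) auto
  also have "\<dots> \<le> (2 / fact j) / (real j + 1)" using Suc by (intro divide_right_mono) auto
  also have "\<dots> = 2 / fact (Suc j)" by (simp add: algebra_simps)
  finally show ?case .
qed

definition MS :: "real \<Rightarrow> nat \<Rightarrow> real" where
  "MS R j = 4 * 2^j / fact j * (R+1)^(2*j+1)"

lemma MS_alt: "MS R j = 4 * (R+1) * (inverse (fact j) * (2*(R+1)^2)^j)"
proof -
  have r: "(R+1)^(2*j+1) = (R+1) * ((R+1)^2)^j" by (simp add: power_mult)
  show ?thesis unfolding MS_def r by (simp add: power_mult_distrib field_simps)
qed

lemma MS_summable: "R \<ge> 0 \<Longrightarrow> summable (MS R)"
  unfolding MS_alt[abs_def] by (intro summable_mult summable_exp)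

lemma two_pow: "real (2*j+1) \<le> 2 * 2^j"
proof (induction j)
  case 0 then show ?case by simp
next
  case (Suc j)
  have "(1::real) \<le> 2^j" by simp
  moreover have "real (2*Suc j+1) = real (2*j+1) + 2" by simp
  moreover have "(2::real)*2^Suc j = 2*(2*2^j)" by simp
  ultimately show ?case using Suc by linarith
qed

lemma S_bounds:
  fixes x :: complex
  assumes "norm x \<le> R"
  shows "norm (of_real (cs j) * x^(2*j+1)) \<le> MS R j"
    "norm (of_nat (2*j+1) * of_real (cs j) * x^(2*j)) \<le> MS R j"
proof -
  have R: "R \<ge> 0" using assms norm_ge_zero[of x] by linarith
  have p: "norm x ^ m \<le> (R+1)^m" for m using assms by (intro power_mono) auto
  have q: "(R+1)^(2*j) \<le> (R+1)^(2*j+1)" using R by (intro power_increasing) auto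
  have o: "(1::real) \<le> 2^j" by simp
  have o4: "(2::real) \<le> 4 * 2^j" using o by linarith
  have "norm (of_real (cs j) * x^(2*j+1)) = cs j * norm x^(2*j+1)"
    using cs_pos[of j] by (simp add: norm_mult norm_power)
  also have "\<dots> \<le> (2 / fact j) * (R+1)^(2*j+1)"
    using cs_le[of j] p[of "2*j+1"] cs_pos[of j] by (intro mult_mono) auto
  also have "(2 / fact j) * (R+1)^(2*j+1) \<le> MS R j" unfolding MS_def using R o4
    by (intro mult_right_mono divide_right_mono) auto
  finally show "norm (of_real (cs j) * x^(2*j+1)) \<le> MS R j" .
  have "norm (of_nat (2*j+1) * of_real (cs j) * x^(2*j)) = real (2*j+1) * cs j * norm x^(2*j)"
    by (simp only: norm_mult norm_power norm_of_nat norm_of_real abs_of_pos[OF cs_pos])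
  also have "\<dots> \<le> (2 * 2^j) * (2 / fact j) * (R+1)^(2*j+1)"
    using two_pow[of j] cs_le[of j] order.trans[OF p[of "2*j"] q] cs_pos[of j]
    by (intro mult_mono) auto
  also have "\<dots> = MS R j" unfolding MS_def by simp
  finally show "norm (of_nat (2*j+1) * of_real (cs j) * x^(2*j)) \<le> MS R j" .
qed

definition Sf :: "complex \<Rightarrow> complex" where "Sf x = (\<Sum>j. of_real (cs j) * x^(2*j+1))"

lemma Sf_facts:
  shows "(\<lambda>j. of_real (cs j) * x^(2*j+1)) sums Sf x"
    "(Sf has_field_derivative (\<Sum>j. of_nat (2*j+1) * of_real (cs j) * x^(2*j))) (at x)"
    "summable (\<lambda>j. of_nat (2*j+1) * of_real (cs j) * x^(2*j))"
proof -
  have d: "((\<lambda>x. of_real (cs n) * x^(2*n+1)) has_field_derivative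
      of_nat (2*n+1) * of_real (cs n) * x^(2*n)) (at x)" for n x
  proof -
    have "((\<lambda>x. x^(2*n+1)) has_field_derivative of_nat (2*n+1) * (1 * x^(2*n+1 - Suc 0))) (at x)"
      by (rule DERIV_power[OF DERIV_ident])
    then have "((\<lambda>x. x^(2*n+1)) has_field_derivative of_nat (2*n+1) * x^(2*n)) (at x)" by simp
    from DERIV_cmult[OF this, of "of_real (cs n)"] show ?thesis by (simp add: algebra_simps)
  qed
  note A = series_deriv_gen[of "\<lambda>n x. of_real (cs n) * x^(2*n+1)" "\<lambda>n x. of_nat (2*n+1) * of_real (cs n) * x^(2*n)" 0 MS x,
      OF d _ _ MS_summable]
  show "(\<lambda>j. of_real (cs j) * x^(2*j+1)) sums Sf x"
    "(Sf has_field_derivative (\<Sum>j. of_nat (2*j+1) * of_real (cs j) * x^(2*j))) (at x)"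
    using A S_bounds unfolding Sf_def[abs_def] by (auto simp: summable_sums)
  show "summable (\<lambda>j. of_nat (2*j+1) * of_real (cs j) * x^(2*j))"
    by (rule summable_comparison_test[OF _ MS_summable[of "norm x"]]) (use S_bounds in auto)
qed

abbreviation qq :: complex where "qq \<equiv> complex_of_real (sqrt pi)"
abbreviation cq :: complex where "cq \<equiv> complex_of_real (2 / sqrt pi)"

lemma qq_cq: "qq * cq = 2"
  by (simp flip: of_real_mult)

lemma Sf_deriv: "(Sf has_field_derivative (cq + 2 * x * Sf x)) (at x)"
proof -
  let ?t = "\<lambda>j. of_nat (2*j+1) * of_real (cs j) * x^(2*j)"
  have "(\<lambda>i. ?t (Suc i)) = (\<lambda>i. 2 * x * (of_real (cs i) * x^(2*i+1)))"
  proof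
    fix i
    have "of_nat (2 * Suc i + 1) * (of_real (cs (Suc i)) :: complex) = 2 * of_real (cs i)"
      using arg_cong[OF cs_rec[of i], of complex_of_real] by (simp add: algebra_simps)
    then show "?t (Suc i) = 2 * x * (of_real (cs i) * x^(2*i+1))"
      by (simp add: algebra_simps power_add power2_eq_square)
  qed
  then have "(\<lambda>i. ?t (Suc i)) sums (2 * x * Sf x)"
    using sums_mult[OF Sf_facts(1), of "2*x"] by simp
  then have "?t sums (2 * x * Sf x + ?t 0)" using sums_Suc_iff[of ?t "2*x*Sf x"] by blast
  then have "(\<Sum>j. ?t j) = 2 * x * Sf x + ?t 0" by (rule sums_unique[symmetric])
  then have e: "(\<Sum>j. ?t j) = cq + 2 * x * Sf x" by (simp add: cs0)
  show ?thesis using Sf_facts(2)[of x] unfolding e .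
qed

lemma Sf_0: "Sf 0 = 0" unfolding Sf_def by simp

lemma Sf_odd: "Sf (-x) = - Sf x"
proof -
  have "(\<lambda>j. of_real (cs j) * (-x)^(2*j+1)) = (\<lambda>j. - (of_real (cs j) * x^(2*j+1)))"
    by (simp add: power_minus')
  then have "(\<lambda>j. of_real (cs j) * (-x)^(2*j+1)) sums (- Sf x)"
    using sums_minus[OF Sf_facts(1)[of x]] by simp
  with Sf_facts(1)[of "-x"] show ?thesis by (metis sums_unique2)
qed

definition Ycl :: "complex \<Rightarrow> complex" where
  "Ycl w = w - 4/3*w^3 + qq/2*(2*w^2-1)*Sf w"

lemma ca_cs2: "ca k = sqrt pi * (cs (Suc k) - cs (Suc (Suc k)) / 2)"
proof -
  have "cs (Suc k) = (real k + 5/2) * cs (Suc (Suc k))" using cs_rec[of "Suc k"] by simp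
  then show ?thesis unfolding ca_cs by (simp add: algebra_simps numeral_eq_Suc)
qed

lemma abs_e: "q*((W2::complex)*(A*X) - 1/2*(B*(W2*X))) = (q*(A - B/2))*(W2*X)"
  by (simp add: algebra_simps)

lemma Y_sums: "(\<lambda>k. of_real (ca k) * w^(2*k+5)) sums Ycl w"
proof -
  define T where "T j = of_real (cs j) * w^(2*j+1)" for j
  have T: "T sums Sf w" unfolding T_def by (rule Sf_facts(1))
  have T1: "(\<lambda>k. T (Suc k)) sums (Sf w - T 0)" using T sums_Suc_iff[of T "Sf w - T 0"] by simp
  have T2: "(\<lambda>k. T (Suc (Suc k))) sums (Sf w - T 0 - T 1)"
    using T1 sums_Suc_iff[of "\<lambda>k. T (Suc k)" "Sf w - T 0 - T 1"] by simp
  have C: "(\<lambda>k. qq * (w^2 * T (Suc k) - 1/2 * T (Suc (Suc k)))) sums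
      (qq * (w^2 * (Sf w - T 0) - 1/2 * (Sf w - T 0 - T 1)))"
    by (intro sums_mult sums_diff T1 T2)
  have e: "qq * (w^2 * T (Suc k) - 1/2 * T (Suc (Suc k))) = of_real (ca k) * w^(2*k+5)" for k
  proof -
    have ce: "of_real (ca k) = qq * (of_real (cs (Suc k)) - of_real (cs (Suc (Suc k))) / 2)"
      unfolding ca_cs2 by simp
    have p1: "w^2 * w^(2*Suc k+1) = w^(2*k+5)"
    proof -
      have "w^2 * w^(2*Suc k+1) = w^(2 + (2*Suc k+1))" by (rule power_add[symmetric])
      also have "\<dots> = w^(2*k+5)" by (rule arg_cong[where f="\<lambda>n. w^n"]) simp
      finally show ?thesis .
    qed
    have p2: "w^(2*Suc (Suc k)+1) = w^(2*k+5)"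
      by (rule arg_cong[where f="\<lambda>n. w^n"]) simp
    show ?thesis unfolding T_def p2 ce p1[symmetric] by (rule abs_e)
  qed
  have v: "qq * (w^2 * (Sf w - T 0) - 1/2 * (Sf w - T 0 - T 1)) = Ycl w"
  proof -
    have a0: "sqrt pi * cs 0 = 2" unfolding cs0 by simp
    have b0: "sqrt pi * cs 1 = 4/3" unfolding cs1 by simp
    have a: "qq * of_real (cs 0) = 2" using arg_cong[OF a0, of complex_of_real] by simp
    have b: "qq * of_real (cs 1) = 4/3" using arg_cong[OF b0, of complex_of_real] by simp
    have "qq * (w^2 * (Sf w - T 0) - 1/2 * (Sf w - T 0 - T 1))
       = qq/2*(2*w^2-1)*Sf w - (qq * of_real (cs 0)) * w^3 + (qq * of_real (cs 0)) * w/2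
         + (qq * of_real (cs 1)) * w^3 / 2"
      unfolding T_def by (simp add: algebra_simps power2_eq_square power3_eq_cube)
    also have "\<dots> = Ycl w" unfolding a b Ycl_def by (simp add: algebra_simps)
    finally show ?thesis .
  qed
  show ?thesis using C unfolding e v .
qed

lemma E_sums: "(\<lambda>k. x^(k+4) / of_nat (fact (k+1))) sums (x^3 * (exp x - 1))" for x :: complex
proof -
  have a: "(\<lambda>n. x^(Suc n) /\<^sub>R fact (Suc n)) sums (exp x - 1)"
    using exp_converges[of x] sums_Suc_iff[of "\<lambda>n. x^n /\<^sub>R fact n" "exp x - 1"] by simp
  have "(\<lambda>n. x^3 * (x^(Suc n) /\<^sub>R fact (Suc n))) sums (x^3 * (exp x - 1))"
    by (rule sums_mult[OF a])
  moreover have "x^3 * (x^(Suc n) /\<^sub>R fact (Suc n)) = x^(n+4) / of_nat (fact (n+1))" for n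
    by (simp add: scaleR_conv_of_real field_simps power_add numeral_eq_Suc del: fact_Suc)
  ultimately show ?thesis by simp
qed

definition Rinf :: "complex \<Rightarrow> complex \<Rightarrow> complex" where
  "Rinf z w = (1/2)*((2*z*w)^3*(exp (2*z*w) - 1)) - 3*z^3*Ycl w"

lemma mid_bound:
  fixes z w :: complex
  assumes "norm z \<le> R" "norm w \<le> R" "1 \<le> R"
  shows "norm (4 * of_real (cc N) * z^(2*N+4) * (\<Sum>l<N. of_real (cb l) * w^(2*l+4))) \<le> MB R N"
proof -
  have sb: "norm (\<Sum>l<N. of_real (cb l) * w^(2*l+4)) \<le> real N * R^(2*N+4)"
  proof -
    have "norm (\<Sum>l<N. of_real (cb l) * w^(2*l+4)) \<le> (\<Sum>l<N. norm (of_real (cb l) * w^(2*l+4)))"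
      by (rule norm_sum)
    also have "\<dots> \<le> (\<Sum>l<N. R^(2*N+4))"
    proof (intro sum_mono)
      fix l assume "l \<in> {..<N}"
      then have l: "2*l+4 \<le> 2*N+4" by simp
      have "norm (of_real (cb l) * w^(2*l+4)) = cb l * norm w^(2*l+4)"
        using cb_pos[of l] by (simp add: norm_mult norm_power)
      also have "\<dots> \<le> 1 * R^(2*l+4)"
        using cb_le1[of l] cb_pos[of l] assms by (intro mult_mono power_mono) auto
      also have "\<dots> \<le> R^(2*N+4)" using assms l by (simp add: power_increasing)
      finally show "norm (of_real (cb l) * w^(2*l+4)) \<le> R^(2*N+4)" .
    qed
    finally show ?thesis by simp
  qed
  have "norm (4 * of_real (cc N) * z^(2*N+4) * (\<Sum>l<N. of_real (cb l) * w^(2*l+4)))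
      = 4 * cc N * norm z^(2*N+4) * norm (\<Sum>l<N. of_real (cb l) * w^(2*l+4))"
    using cc_pos[of N] by (simp add: norm_mult norm_power)
  also have "\<dots> \<le> 4 * cc N * R^(2*N+4) * (real N * R^(2*N+4))"
    using assms cc_pos[of N] sb by (intro mult_mono power_mono mult_left_mono) auto
  also have "\<dots> = ca N * real ((2*N+5)*(2*N+2)) * real N * R^(4*N+8)"
    unfolding s1_real[symmetric] by (simp add: algebra_simps power_add[symmetric] mult_2)
  also have "\<dots> \<le> MB R N"
  proof -
    have n: "real ((2*N+5)*(2*N+2)) * real N \<le> 2 * real ((N+1)*(2*N+5)^2)"
      by (simp add: power2_eq_square algebra_simps)
    have r: "R^(4*N+8) \<le> R^(4*N+9)" using assms by (intro power_increasing) auto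
    have "ca N * real ((2*N+5)*(2*N+2)) * real N * R^(4*N+8)
        = ca N * (real ((2*N+5)*(2*N+2)) * real N) * R^(4*N+8)" by simp
    also have "\<dots> \<le> ca N * (2 * real ((N+1)*(2*N+5)^2)) * R^(4*N+9)"
    proof -
      have "ca N * (real ((2*N+5)*(2*N+2)) * real N) \<le> ca N * (2 * real ((N+1)*(2*N+5)^2))"
        by (rule mult_left_mono[OF n]) (use ca_pos[of N] in auto)
      from mult_mono[OF this r] show ?thesis using ca_pos[of N] assms by auto
    qed
    also have "\<dots> = MB R N" unfolding MB_def by simp
    finally show ?thesis .
  qed
  finally show ?thesis .
qed

lemma Rp_lim: "(\<lambda>N. Rp N z w) \<longlonglongrightarrow> Rinf z w"
proof -
  define R where "R = max 1 (max (norm z) (norm w))"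
  have R: "norm z \<le> R" "norm w \<le> R" "1 \<le> R" unfolding R_def by auto
  have A0: "(\<lambda>n. \<Sum>k<n. (2*z*w)^(k+4) / of_nat (fact (k+1))) \<longlonglongrightarrow> (2*z*w)^3 * (exp (2*z*w) - 1)"
    using E_sums[of "2*z*w"] by (simp add: sums_def)
  have sm: "strict_mono (\<lambda>N::nat. 2*N)" by (simp add: strict_mono_def)
  have A: "(\<lambda>N. \<Sum>k<2*N. (2*z*w)^(k+4) / of_nat (fact (k+1))) \<longlonglongrightarrow> (2*z*w)^3 * (exp (2*z*w) - 1)"
    using LIMSEQ_subseq_LIMSEQ[OF A0 sm] by (simp add: o_def)
  have sR: "summable (MB R)" using R by (intro MB_summable) auto
  have B: "(\<lambda>N. 4 * of_real (cc N) * z^(2*N+4) * (\<Sum>l<N. of_real (cb l) * w^(2*l+4))) \<longlonglongrightarrow> 0"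
    by (rule Lim_null_comparison[OF _ summable_LIMSEQ_zero[OF sR]])
      (use mid_bound[OF R] R in auto)
  have C: "(\<lambda>N. \<Sum>k<N. of_real (ca k) * w^(2*k+5)) \<longlonglongrightarrow> Ycl w"
    using Y_sums[of w] by (simp add: sums_def)
  have "(\<lambda>N. (1/2) * (\<Sum>k<2*N. (2*z*w)^(k+4) / of_nat (fact (k+1)))
     - 4 * of_real (cc N) * z^(2*N+4) * (\<Sum>l<N. of_real (cb l) * w^(2*l+4))
     - 3 * z^3 * (\<Sum>k<N. of_real (ca k) * w^(2*k+5))) \<longlonglongrightarrow>
     (1/2) * ((2*z*w)^3 * (exp (2*z*w) - 1)) - 0 - 3*z^3*Ycl w"
    by (intro tendsto_intros A B C)
  then show ?thesis unfolding Rp_def[abs_def] Rinf_def by simp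
qed

lemma LP: "z*P2f w z - (2*z^2+2)*P1f w z - 2*z*Pf w z = Rinf z w"
proof -
  have a: "(\<lambda>N. h0 N w z) \<longlonglongrightarrow> Pf w z" unfolding h0_eq Pf_def by (rule summable_LIMSEQ[OF Pf_facts(1)])
  have b: "(\<lambda>N. h1 N w z) \<longlonglongrightarrow> P1f w z" unfolding h1_eq P1f_def by (rule summable_LIMSEQ[OF Pf_facts(2)])
  have c: "(\<lambda>N. h2 N w z) \<longlonglongrightarrow> P2f w z" unfolding h2_eq P2f_def by (rule summable_LIMSEQ[OF Pf_facts(3)])
  have "(\<lambda>N. z * h2 N w z - (2*z^2+2) * h1 N w z - 2*z*h0 N w z) \<longlonglongrightarrow>
      z*P2f w z - (2*z^2+2)*P1f w z - 2*z*Pf w z"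
    by (intro tendsto_intros a b c)
  then have "(\<lambda>N. Rp N z w) \<longlonglongrightarrow> z*P2f w z - (2*z^2+2)*P1f w z - 2*z*Pf w z"
    unfolding Lop_sum tele .
  from LIMSEQ_unique[OF this Rp_lim] show ?thesis .
qed



lemma Sf_comp_eq[derivative_intros]:
  "(f has_field_derivative f') (at x within s) \<Longrightarrow> D = (cq + 2 * f x * Sf (f x)) * f' \<Longrightarrow>
   ((\<lambda>x. Sf (f x)) has_field_derivative D) (at x within s)"
proof -
  assume a: "(f has_field_derivative f') (at x within s)" and d: "D = (cq + 2 * f x * Sf (f x)) * f'"
  have "(Sf has_field_derivative (cq + 2 * f x * Sf (f x))) (at (f x))" by (rule Sf_deriv)
  from DERIV_chain2[OF this a] show ?thesis unfolding d .
qed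

lemma qq_nz: "qq \<noteq> 0" by simp

definition Qt :: "complex \<Rightarrow> complex \<Rightarrow> complex" where
  "Qt w z = (1/2)*(z - w)*(1 + z*w - exp (2*z*w)) + qq/4*(exp (2*z*w)*(2*z^2-1)*(2*w^2-1)*Sf (z-w)
     + (z^2-1)*(2*w^2-1)*Sf w - (w^2-1)*(2*z^2-1)*Sf z)"

definition Qt1 :: "complex \<Rightarrow> complex \<Rightarrow> complex" where
  "Qt1 w z = (1/2)*(1 + z*w - exp (2*z*w)) + (1/2)*(z-w)*(w - 2*w*exp (2*z*w))
   + qq/4*((2*w^2-1)*exp (2*z*w)*((4*z^3+2*z)*Sf (z-w) + cq*(2*z^2-1)) + 2*z*(2*w^2-1)*Sf w
       - (w^2-1)*((4*z^3+2*z)*Sf z + cq*(2*z^2-1)))"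

definition Qt2 :: "complex \<Rightarrow> complex \<Rightarrow> complex" where
  "Qt2 w z = (w - 2*w*exp (2*z*w)) - 2*w^2*(z-w)*exp (2*z*w)
   + qq/4*((2*w^2-1)*(2*w*exp (2*z*w)*((4*z^3+2*z)*Sf (z-w) + cq*(2*z^2-1))
        + exp (2*z*w)*((12*z^2+2)*Sf (z-w) + (4*z^3+2*z)*(cq + 2*(z-w)*Sf (z-w)) + 4*cq*z))
     + 2*(2*w^2-1)*Sf w
     - (w^2-1)*((12*z^2+2)*Sf z + (4*z^3+2*z)*(cq + 2*z*Sf z) + 4*cq*z))"

lemma Qt_d1: "(Qt w has_field_derivative Qt1 w z) (at z)"
  unfolding Qt_def[abs_def]
  apply (rule derivative_eq_intros refl | simp only: )+
  unfolding Qt1_def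
  using qq_nz apply (simp add: field_simps power2_eq_square power3_eq_cube)
  done

lemma Qt_d2: "(Qt1 w has_field_derivative Qt2 w z) (at z)"
  unfolding Qt1_def[abs_def]
  apply (rule derivative_eq_intros refl | simp only: )+
  unfolding Qt2_def
  using qq_nz apply (simp add: field_simps power2_eq_square power3_eq_cube)
  done

lemma LQ: "z*Qt2 w z - (2*z^2+2)*Qt1 w z - 2*z*Qt w z = Rinf z w"
  unfolding Qt_def Qt1_def Qt2_def Rinf_def Ycl_def
  using qq_nz by (simp add: field_simps power2_eq_square power3_eq_cube)

lemma cont_zero:
  fixes F :: "complex \<Rightarrow> complex"
  assumes "isCont F 0" "\<And>z. z \<noteq> 0 \<Longrightarrow> F z = 0"
  shows "F 0 = 0"
proof -
  have a: "F \<midarrow>0\<rightarrow> F 0" using assms(1) by (simp add: isCont_def)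
  have "\<forall>\<^sub>F z in at 0. F z = 0" using assms(2) by (auto simp: eventually_at intro: exI[of _ 1])
  then have b: "F \<midarrow>0\<rightarrow> 0" by (rule tendsto_eventually)
  from LIM_unique[OF a b] show ?thesis .
qed

lemma wronski:
  fixes f f1 f2 g g1 g2 :: "complex \<Rightarrow> complex"
  assumes f: "\<And>z. (f has_field_derivative f1 z) (at z)" "\<And>z. (f1 has_field_derivative f2 z) (at z)"
      "\<And>z. z*f2 z - (2*z^2+2)*f1 z - 2*z*f z = 0"
    and g: "\<And>z. (g has_field_derivative g1 z) (at z)" "\<And>z. (g1 has_field_derivative g2 z) (at z)"
      "\<And>z. z*g2 z - (2*z^2+2)*g1 z - 2*z*g z = 0"
  shows "\<exists>c. \<forall>z. f z * g1 z - f1 z * g z = c * z^2 * exp (z^2)"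
proof -
  define Wr where "Wr z = f z * g1 z - f1 z * g z" for z
  have W': "(Wr has_field_derivative (f z * g2 z - f2 z * g z)) (at z)" for z
    unfolding Wr_def[abs_def]
    by (rule derivative_eq_intros f g refl | simp only:)+ (simp add: algebra_simps)
  have key: "z*(f z * g2 z - f2 z * g z) = (2*z^2+2) * Wr z" for z
  proof -
    have e1: "z*f2 z = (2*z^2+2)*f1 z + 2*z*f z" using f(3)[of z] by (simp add: algebra_simps)
    have e2: "z*g2 z = (2*z^2+2)*g1 z + 2*z*g z" using g(3)[of z] by (simp add: algebra_simps)
    have "z*(f z * g2 z - f2 z * g z) = f z * (z*g2 z) - g z * (z*f2 z)" by (simp add: algebra_simps)
    also have "\<dots> = (2*z^2+2) * Wr z" unfolding e1 e2 Wr_def by (simp add: algebra_simps)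
    finally show ?thesis .
  qed
  define V where "V z = exp (-(z^2)) * Wr z" for z
  have V': "(V has_field_derivative exp (-(z^2)) * ((f z * g2 z - f2 z * g z) - 2*z*Wr z)) (at z)" for z
    unfolding V_def[abs_def]
    by (rule derivative_eq_intros W' refl | simp only:)+ (simp add: algebra_simps)
  define h where "h z = V z / z^2" for z
  have h': "(h has_field_derivative 0) (at z)" if z: "z \<noteq> 0" for z
  proof -
    have "(h has_field_derivative
       ((exp (-(z^2)) * ((f z * g2 z - f2 z * g z) - 2*z*Wr z)) * z^2 - V z * (2*z)) / (z^2 * z^2)) (at z)"
    proof -
      have p: "((\<lambda>z. z^2) has_field_derivative 2*z) (at z)" by (auto intro!: derivative_eq_intros)
      show ?thesis unfolding h_def[abs_def] by (rule DERIV_divide[OF V' p]) (use z in simp)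
    qed
    moreover have "(exp (-(z^2)) * ((f z * g2 z - f2 z * g z) - 2*z*Wr z)) * z^2 - V z * (2*z) = 0"
    proof -
      have "(exp (-(z^2)) * ((f z * g2 z - f2 z * g z) - 2*z*Wr z)) * z^2 - V z * (2*z)
         = exp (-(z^2)) * z * (z*(f z * g2 z - f2 z * g z) - 2*z^2*Wr z - 2*Wr z)"
        unfolding V_def by (simp add: algebra_simps power2_eq_square)
      also have "\<dots> = 0" unfolding key by (simp add: algebra_simps)
      finally show ?thesis .
    qed
    ultimately show ?thesis by simp
  qed
  have "continuous_on (- {0}) h"
  proof (intro continuous_at_imp_continuous_on ballI)
    fix z :: complex assume "z \<in> - {0}"
    then have "z \<noteq> 0" by simp
    from DERIV_isCont[OF h'[OF this]] show "isCont h z" .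
  qed
  then obtain c where c: "\<And>z. z \<in> - {0} \<Longrightarrow> h z = c"
    using DERIV_zero_connected_constant[of "- {0::complex}" "{}" h]
      connected_punctured_universe[of "0::complex"] h' by auto
  have "f z * g1 z - f1 z * g z = c * z^2 * exp (z^2)" for z
  proof (cases "z = 0")
    case True
    have "2 * Wr 0 = 0" using key[of 0] by simp
    then show ?thesis using True Wr_def by simp
  next
    case False
    have "h z = c" using c False by auto
    then have "exp (-(z^2)) * Wr z = c * z^2" using False unfolding h_def V_def by (simp add: field_simps)
    then have "exp (z^2) * (exp (-(z^2)) * Wr z) = exp (z^2) * (c * z^2)" by simp
    then have "Wr z = exp (z^2) * (c * z^2)" by (simp add: exp_minus field_simps)
    then show ?thesis unfolding Wr_def by (simp add: algebra_simps)
  qed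
  then show ?thesis by blast
qed

definition pe :: "complex \<Rightarrow> complex" where "pe z = exp (z^2) * (2*z^2-1)"
definition pe1 :: "complex \<Rightarrow> complex" where "pe1 z = exp (z^2) * (4*z^3+2*z)"
definition pe2 :: "complex \<Rightarrow> complex" where "pe2 z = exp (z^2) * (2*z*(4*z^3+2*z) + 12*z^2+2)"
definition po :: "complex \<Rightarrow> complex" where "po z = (2*z^2-1)*Sf z + cq*z"
definition po1 :: "complex \<Rightarrow> complex" where "po1 z = (4*z^3+2*z)*Sf z + cq*(2*z^2-1) + cq"
definition po2 :: "complex \<Rightarrow> complex" where
  "po2 z = (12*z^2+2)*Sf z + (4*z^3+2*z)*(cq + 2*z*Sf z) + 4*cq*z"

lemma pe_d1: "(pe has_field_derivative pe1 z) (at z)"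
  unfolding pe_def[abs_def] pe1_def
  by (rule derivative_eq_intros refl | simp only:)+ (simp add: algebra_simps power2_eq_square power3_eq_cube)
lemma pe_d2: "(pe1 has_field_derivative pe2 z) (at z)"
  unfolding pe1_def[abs_def] pe2_def
  by (rule derivative_eq_intros refl | simp only:)+ (simp add: algebra_simps power2_eq_square power3_eq_cube)
lemma pe_d3: "z*pe2 z - (2*z^2+2)*pe1 z - 2*z*pe z = 0"
  unfolding pe_def pe1_def pe2_def by (simp add: algebra_simps power2_eq_square power3_eq_cube)
lemmas pe_d = pe_d1 pe_d2 pe_d3

lemma po_d1: "(po has_field_derivative po1 z) (at z)"
  unfolding po_def[abs_def] po1_def
  by (rule derivative_eq_intros refl | simp only:)+ (simp add: field_simps qq_nz power2_eq_square power3_eq_cube)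
lemma po_d2: "(po1 has_field_derivative po2 z) (at z)"
  unfolding po1_def[abs_def] po2_def
  by (rule derivative_eq_intros refl | simp only:)+ (simp add: field_simps qq_nz power2_eq_square power3_eq_cube)
lemma po_d3: "z*po2 z - (2*z^2+2)*po1 z - 2*z*po z = 0"
  unfolding po_def po1_def po2_def by (simp add: field_simps qq_nz power2_eq_square power3_eq_cube)
lemmas po_d = po_d1 po_d2 po_d3

lemma W_eo: "pe z * po1 z - pe1 z * po z = - 4 * cq * z^2 * exp (z^2)"
  unfolding pe_def pe1_def po_def po1_def by (simp add: algebra_simps power2_eq_square power3_eq_cube)

lemma pe0: "pe 0 = -1" unfolding pe_def by simp
lemma po0: "po 0 = 0" unfolding po_def by (simp add: Sf_0)

lemma ode_unique:
  fixes D D1 D2 :: "complex \<Rightarrow> complex"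
  assumes d: "\<And>z. (D has_field_derivative D1 z) (at z)" "\<And>z. (D1 has_field_derivative D2 z) (at z)"
      "\<And>z. z*D2 z - (2*z^2+2)*D1 z - 2*z*D z = 0" and D0: "D 0 = 0"
  shows "\<exists>\<beta>. \<forall>z. D z = \<beta> * po z"
proof -
  obtain c1 where c1: "\<And>z. pe z * D1 z - pe1 z * D z = c1 * z^2 * exp (z^2)"
    using wronski[OF pe_d d] by blast
  obtain c2 where c2: "\<And>z. po z * D1 z - po1 z * D z = c2 * z^2 * exp (z^2)"
    using wronski[OF po_d d] by blast
  have cq: "cq \<noteq> 0" by simp
  define \<beta> where "\<beta> = - c1 / (4*cq)"
  define \<alpha> where "\<alpha> = c2 / (4*cq)"
  have main: "D z = \<beta> * po z + \<alpha> * pe z" if z: "z \<noteq> 0" for z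
  proof -
    have "po z * (pe z * D1 z - pe1 z * D z) - pe z * (po z * D1 z - po1 z * D z)
        = D z * (pe z * po1 z - pe1 z * po z)" by (simp add: algebra_simps)
    then have eq: "(c1 * po z - c2 * pe z) * (z^2 * exp (z^2)) = (- 4 * cq * D z) * (z^2 * exp (z^2))"
      unfolding c1 c2 W_eo by (simp only: algebra_simps)
    have K: "z^2 * exp (z^2) \<noteq> 0" using z by simp
    from eq have "c1 * po z - c2 * pe z = - 4 * cq * D z" using mult_right_cancel[OF K] by blast
    then show ?thesis unfolding \<beta>_def \<alpha>_def using cq by (simp add: field_simps)
  qed
  define F where "F z = D z - \<beta> * po z - \<alpha> * pe z" for z
  have "isCont F 0" unfolding F_def[abs_def]
    using DERIV_isCont[OF d(1)] DERIV_isCont[OF pe_d(1)] DERIV_isCont[OF po_d(1)]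
    by (intro continuous_intros) auto
  then have "F 0 = 0" by (rule cont_zero) (use main in \<open>auto simp: F_def\<close>)
  then have a0: "\<alpha> = 0" unfolding F_def using D0 pe0 po0 by simp
  have "D z = \<beta> * po z" for z
  proof (cases "z = 0")
    case True then show ?thesis using D0 po0 by simp
  next
    case False then show ?thesis using main a0 by simp
  qed
  then show ?thesis by blast
qed



lemma cerf_prim: "\<exists>G. (\<forall>x. (G has_field_derivative exp (-(x^2))) (at x)) \<and>
    (\<forall>z. cerf z = cq * (G z - G 0))"
proof -
  have "\<exists>G. \<forall>x\<in>UNIV. (G has_field_derivative exp (-((x::complex)^2))) (at x)"
  proof (rule holomorphic_starlike_primitive[where f="\<lambda>x. exp (-(x^2))" and S=UNIV and k="{}"])
    show "continuous_on UNIV (\<lambda>x::complex. exp (-(x^2)))" by (intro continuous_intros)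
    show "(\<lambda>x. exp (-(x^2))) field_differentiable at x" for x :: complex
      by (auto intro!: derivative_eq_intros simp: field_differentiable_def)
  qed auto
  then obtain G where G: "\<And>x::complex. (G has_field_derivative exp (-(x^2))) (at x)" by blast
  have "cerf z = cq * (G z - G 0)" for z
  proof -
    have "((\<lambda>t. exp (-(t^2))) has_contour_integral (G (pathfinish (linepath 0 z)) - G (pathstart (linepath 0 z)))) (linepath 0 z)"
      by (rule contour_integral_primitive[where S=UNIV, OF _ valid_path_linepath])
        (use G in \<open>auto intro: has_field_derivative_at_within\<close>)
    then have "contour_integral (linepath 0 z) (\<lambda>t. exp (-(t^2))) = G z - G 0"
      by (simp add: contour_integral_unique)
    then show ?thesis unfolding cerf_def by simp
  qed
  with G show ?thesis by blast
qed

lemma cerf_Sf: "cerf x = Sf x / exp (x^2)"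
proof -
  obtain G where G: "\<And>x. (G has_field_derivative exp (-(x^2))) (at x)" "\<And>z. cerf z = cq * (G z - G 0)"
    using cerf_prim by blast
  define H where "H x = exp (-(x^2)) * Sf x - cq * (G x - G 0)" for x
  have "(H has_field_derivative 0) (at x within UNIV)" for x
  proof -
    have "(H has_field_derivative (exp (-(x^2)) * (-(2*x)) * Sf x + exp (-(x^2)) * (cq + 2*x*Sf x)
        - cq * exp (-(x^2)))) (at x)"
      unfolding H_def[abs_def]
      by (rule derivative_eq_intros G(1) Sf_deriv refl | simp only:)+ (simp add: algebra_simps)
    moreover have "exp (-(x^2)) * (-(2*x)) * Sf x + exp (-(x^2)) * (cq + 2*x*Sf x) - cq * exp (-(x^2)) = 0"
      by (simp add: algebra_simps)
    ultimately show ?thesis by simp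
  qed
  then obtain c where c: "\<And>x. H x = c" using has_field_derivative_zero_constant[of UNIV H] by auto
  have "H 0 = 0" unfolding H_def by (simp add: Sf_0)
  then have "H x = 0" using c by metis
  then have "exp (-(x^2)) * Sf x = cerf x" unfolding H_def G(2) by simp
  then show ?thesis by (simp add: exp_minus field_simps)
qed

definition DD :: "complex \<Rightarrow> complex \<Rightarrow> complex" where "DD w z = Pf w z - Qt w z"

lemma hr0_zero: "hr0 n w 0 = 0" unfolding hr0_def by (simp add: zero_power)

lemma Pf_zero: "Pf w 0 = 0" unfolding Pf_def hr0_zero by simp

lemma Qt_zero: "Qt w 0 = 0" unfolding Qt_def by (simp add: Sf_odd Sf_0)

lemma DD_form: "\<exists>\<beta>. \<forall>z. DD w z = \<beta> * po z"
proof (rule ode_unique)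
  show "(DD w has_field_derivative P1f w z - Qt1 w z) (at z)" for z
    unfolding DD_def[abs_def] by (intro derivative_intros Pf_facts(4) Qt_d1)
  show "((\<lambda>z. P1f w z - Qt1 w z) has_field_derivative P2f w z - Qt2 w z) (at z)" for z
    by (intro derivative_intros Pf_facts(5) Qt_d2)
  show "z * (P2f w z - Qt2 w z) - (2*z^2+2) * (P1f w z - Qt1 w z) - 2*z*DD w z = 0" for z
    using LP[of z w] LQ[of z w] unfolding DD_def by (simp add: algebra_simps)
  show "DD w 0 = 0" unfolding DD_def Pf_zero Qt_zero by simp
qed

lemma hr0_anti: "hr0 n w z = - hr0 n z w"
  unfolding hr0_def by (simp add: sum_negf[symmetric] algebra_simps)

lemma Pf_anti: "Pf w z = - Pf z w"
  unfolding Pf_def hr0_anti[of _ w z] by (rule suminf_minus[OF Pf_facts(1)])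

lemma Qt_anti: "Qt w z = - Qt z w"
proof -
  have s: "Sf (w - z) = - Sf (z - w)" using Sf_odd[of "z - w"] by simp
  have e: "exp (2*w*z) = exp (2*z*w)" by (rule arg_cong[where f=exp]) (simp add: algebra_simps)
  have t1: "(z - w)*(1 + z*w - exp (2*z*w)) = - ((w - z)*(1 + w*z - exp (2*z*w)))"
    by (simp add: algebra_simps)
  have t2: "exp (2*z*w)*(2*z^2-1)*(2*w^2-1)*Sf (z-w) + (z^2-1)*(2*w^2-1)*Sf w - (w^2-1)*(2*z^2-1)*Sf z
    = - (exp (2*z*w)*(2*w^2-1)*(2*z^2-1)*(- Sf (z-w)) + (w^2-1)*(2*z^2-1)*Sf z - (z^2-1)*(2*w^2-1)*Sf w)"
    by (simp add: algebra_simps)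
  have t3: "x*y = -(x'*y') \<Longrightarrow> b = -b' \<Longrightarrow> (1/2)*x*y + q/4*b = -((1/2)*x'*y' + q/4*b')"
    for x y x' y' b b' q :: complex
    by (simp add: algebra_simps)
  show ?thesis unfolding Qt_def s e by (rule t3[OF t1 t2])
qed

lemma DD_anti: "DD w z = - DD z w"
proof -
  have a: "Pf w z = - Pf z w" "Qt w z = - Qt z w" by (rule Pf_anti, rule Qt_anti)
  show ?thesis unfolding DD_def a by simp
qed

lemma po_nonzero: "\<exists>z0. po z0 \<noteq> 0"
proof (rule ccontr)
  assume "\<not> (\<exists>z0. po z0 \<noteq> 0)"
  then have p: "po = (\<lambda>_. 0)" by auto
  have "(po has_field_derivative 0) (at 1)" unfolding p by simp
  with po_d1[of 1] have "po1 1 = 0" using DERIV_unique by blast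
  moreover have "po 1 = 0" by (metis p)
  ultimately show False using W_eo[of 1] by simp
qed

lemma DD_zero: "DD w z = 0"
proof -
  obtain z0 where z0: "po z0 \<noteq> 0" using po_nonzero by blast
  obtain b where b: "\<And>w. \<forall>z. DD w z = b w * po z" using DD_form by metis
  have "DD z0 z0 = 0" using DD_anti[of z0 z0] by simp
  then have bz0: "b z0 = 0" using b[of z0] z0 by simp
  have "DD w z0 = 0" using DD_anti[of w z0] b[of z0] bz0 by simp
  then have "b w = 0" using b[of w] z0 by simp
  then show ?thesis using b[of w] by simp
qed

lemma Pf_Qt: "Pf w z = Qt w z" using DD_zero[of w z] unfolding DD_def by simp



lemma skew_row: "skew_kernel N z w = (\<Sum>k<N. krow k z w)"
  unfolding skew_kernel_def G_alt krow_def
  by (simp add: sum_subtractf[symmetric] right_diff_distrib mult.assoc)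

lemma hr0_row: "hr0 k w z = (z*w)^4 * krow k z w"
  unfolding hr0_def krow_def sum_distrib_left
  by (intro sum.cong refl) (simp add: algebra_simps power_mult_distrib power_add eval_nat_numeral)

lemma row_summable: "summable (\<lambda>k. krow k z w)"
proof -
  define R where "R = max 1 (max (norm z) (norm w))"
  have R: "norm z \<le> R" "norm w \<le> R" "1 \<le> R" unfolding R_def by auto
  show ?thesis
    by (rule summable_comparison_test[OF _ MB_summable[of R]]) (use hr_bounds(4)[OF R] R in auto)
qed

lemma Pf_row: "Pf w z = (z*w)^4 * (\<Sum>k. krow k z w)"
  unfolding Pf_def hr0_row by (rule suminf_mult[OF row_summable])

lemma kernel_eq:
  assumes "z*w \<noteq> 0"
  shows "(\<Sum>k. krow k z w) = kernel_limit z w"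
proof -
  let ?E = "exp (2*z*w)"
  have ex: "exp (z^2 + w^2) = ?E * exp ((z-w)^2)"
  proof -
    have "z^2 + w^2 = 2*z*w + (z-w)^2" by (simp add: power2_eq_square algebra_simps)
    then show ?thesis by (simp add: exp_add)
  qed
  have eB: "exp (z^2 + w^2) * cerf (z - w) = ?E * Sf (z - w)"
    unfolding ex cerf_Sf by simp
  have eW: "exp (w^2) * cerf w = Sf w" unfolding cerf_Sf by simp
  have eZ: "exp (z^2) * cerf z = Sf z" unfolding cerf_Sf by simp
  have r1: "qq / 4 * exp (z^2 + w^2) * (2*z^2 - 1) * (2*w^2 - 1) * cerf (z - w)
     = qq / 4 * ((2*z^2 - 1) * (2*w^2 - 1) * (exp (z^2 + w^2) * cerf (z - w)))"
    by (simp only: mult_ac)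
  have r2: "(z^2 - 1) * (2*w^2 - 1) * exp (w^2) * cerf w - (w^2 - 1) * (2*z^2 - 1) * exp (z^2) * cerf z
     = (z^2 - 1) * (2*w^2 - 1) * (exp (w^2) * cerf w) - (w^2 - 1) * (2*z^2 - 1) * (exp (z^2) * cerf z)"
    by (simp only: mult_ac)
  have k1: "kernel_limit z w = ((1/2) * (z - w) * (1 + z*w - ?E)
      + qq / 4 * ((2*z^2 - 1) * (2*w^2 - 1) * (exp (z^2 + w^2) * cerf (z - w)))
      + qq / 4 * ((z^2 - 1) * (2*w^2 - 1) * (exp (w^2) * cerf w) - (w^2 - 1) * (2*z^2 - 1) * (exp (z^2) * cerf z)))
      / (z*w)^4"
    unfolding kernel_limit_def r1 r2 by (simp only: add_divide_distrib)
  have k2: "((1/2) * (z - w) * (1 + z*w - ?E)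
      + qq / 4 * ((2*z^2 - 1) * (2*w^2 - 1) * (?E * Sf (z - w)))
      + qq / 4 * ((z^2 - 1) * (2*w^2 - 1) * Sf w - (w^2 - 1) * (2*z^2 - 1) * Sf z)) = Qt w z"
  proof -
    have m: "(2*z^2 - 1) * (2*w^2 - 1) * (?E * Sf (z - w)) = ?E * (2*z^2-1)*(2*w^2-1)*Sf (z-w)"
      by (simp only: mult_ac)
    have ab: "a + q*X + q*(Y1 - Y2) = a + q*(X + Y1 - Y2)" for a q X Y1 Y2 :: complex
      by (simp add: algebra_simps)
    show ?thesis unfolding Qt_def m by (rule ab)
  qed
  have "kernel_limit z w = Qt w z / (z*w)^4" by (simp only: k1 eB eW eZ k2)
  also have "\<dots> = (\<Sum>k. krow k z w)" using assms unfolding Pf_Qt[symmetric] Pf_row by simp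
  finally show ?thesis by simp
qed

lemma row_uniform:
  assumes "compact (S :: (complex \<times> complex) set)"
  shows "uniform_limit S (\<lambda>N p. skew_kernel N (fst p) (snd p)) (\<lambda>p. \<Sum>k. krow k (fst p) (snd p)) sequentially"
proof -
  obtain B where B: "\<And>p. p \<in> S \<Longrightarrow> norm p \<le> B"
    using compact_imp_bounded[OF assms] by (auto simp: bounded_iff)
  define R where "R = max 1 B"
  have R: "1 \<le> R" unfolding R_def by simp
  have b: "norm (krow k (fst p) (snd p)) \<le> MB R k" if "p \<in> S" for k p
  proof -
    have n1: "norm (fst p) \<le> norm p" using norm_fst_le[of "fst p" "snd p"] by simp
    have n2: "norm (snd p) \<le> norm p" using norm_snd_le[of "snd p" "fst p"] by simp
    have "norm (fst p) \<le> R" "norm (snd p) \<le> R"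
      using B[OF that] n1 n2 max.cobounded2[of 1 B] unfolding R_def by linarith+
    then show ?thesis using hr_bounds(4) R by blast
  qed
  have "uniform_limit S (\<lambda>n p. \<Sum>i<n. krow i (fst p) (snd p)) (\<lambda>p. \<Sum>i. krow i (fst p) (snd p)) sequentially"
    by (rule Weierstrass_m_test[OF b MB_summable]) (use R in auto)
  then show ?thesis unfolding skew_row .
qed


theorem proposition3p2:
  shows "(\<forall>N::nat. N \<ge> 1 \<longrightarrow> (\<forall>z w :: complex.
      z * deriv (deriv (\<lambda>\<zeta>. skew_kernel_hat N \<zeta> w)) z
      - (2 * z^2 + 2) * deriv (\<lambda>\<zeta>. skew_kernel_hat N \<zeta> w) z
      - 2 * z * skew_kernel_hat N z w
    = (1/2) * (\<Sum>k\<le>2*N-1. (2*z*w) ^ (k+4) / of_nat (fact (k+1)))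
      - 4 * complex_of_real (sqrt pi * (real N + 1) * (real N + 2) / Gamma (real N + 5/2))
          * z ^ (2*N+4) * (\<Sum>l<N. complex_of_real ((real l + 3/2) / fact (l+2)) * w ^ (2*l+4))
      - 3 * complex_of_real (sqrt pi) * z^3
          * (\<Sum>k<N. complex_of_real ((real k + 2) / Gamma (real k + 7/2)) * w ^ (2*k+5))))
   \<and> (\<exists>K :: complex \<times> complex \<Rightarrow> complex.
        (\<forall>z w. z * w \<noteq> 0 \<longrightarrow> K (z, w) = kernel_limit z w) \<and>
        (\<forall>S :: (complex \<times> complex) set. compact S \<longrightarrow>
           uniform_limit S (\<lambda>N p. skew_kernel N (fst p) (snd p)) K sequentially))"
  apply (rule conjI)
   apply (intro allI impI)
   apply (rule part1, assumption)
  apply (rule exI[of _ "\<lambda>p. \<Sum>k. krow k (fst p) (snd p)"])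
  apply (intro conjI allI impI)
   apply (simp add: kernel_eq)
  apply (rule row_uniform, assumption)
  done

end
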